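(* Let $G$ be a gap-free simple graph and let $u$ be a minimal monomial generator of $I(G)^2$. Let $X_0$ be the set of variables $x_i$ with $x_i\in (I(G)^{(4)}:u)$ (possibly empty). Then $$\big(I(G)^{(4)}:u\big)+\big(I(G)^3:u\big)=\big(I(G)^3:u\big)+(X_0).$$
   Context: $S=\mathbb{K}[x_1,\dots,x_n]$ over a field $\mathbb{K}$; vertices of $G$ are the variables, edges identified with quadratic monomials. $I(G)$ is the edge ideal and $I(G)^{(s)}=\bigcap_{C\in\mathcal{C}(G)}\mathfrak{p}_C^s$, where $\mathcal{C}(G)$ is the set of minimal vertex covers and $\mathfrak{p}_C$ is generated by the variables in $C$. Two disjoint edges form a gap if the induced subgraph on their four endpoints has only these two edges; $G$ is gap-free if it has no gap. $(X_0)$ denotes the ideal generated by $X_0$ (the zero ideal if $X_0=\emptyset$). *)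

theory Defs
  imports "HOL-Library.Poly_Mapping"
begin

type_synonym ('v, 'k) mpoly = "('v \<Rightarrow>\<^sub>0 nat) \<Rightarrow>\<^sub>0 'k"

definition monom :: "('v \<Rightarrow>\<^sub>0 nat) \<Rightarrow> ('v, 'k::comm_ring_1) mpoly" where
  "monom a = Poly_Mapping.single a 1"

definition var :: "'v \<Rightarrow> ('v, 'k::comm_ring_1) mpoly" where
  "var i = monom (Poly_Mapping.single i 1)"

definition is_monomial :: "('v, 'k::comm_ring_1) mpoly \<Rightarrow> bool" where
  "is_monomial u \<longleftrightarrow> (\<exists>a. u = monom a)"

inductive_set ideal_gen :: "'a::comm_ring_1 set \<Rightarrow> 'a set" for A where
  zero: "0 \<in> ideal_gen A"
| step: "a \<in> A \<Longrightarrow> f \<in> ideal_gen A \<Longrightarrow> r * a + f \<in> ideal_gen A"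

definition ideal_prod :: "'a::comm_ring_1 set \<Rightarrow> 'a set \<Rightarrow> 'a set" where
  "ideal_prod I J = ideal_gen {f * g | f g. f \<in> I \<and> g \<in> J}"

fun ideal_pow :: "'a::comm_ring_1 set \<Rightarrow> nat \<Rightarrow> 'a set" where
  "ideal_pow I 0 = UNIV"
| "ideal_pow I (Suc s) = ideal_prod (ideal_pow I s) I"

definition ideal_sum :: "'a::comm_ring_1 set \<Rightarrow> 'a set \<Rightarrow> 'a set" where
  "ideal_sum I J = {f + g | f g. f \<in> I \<and> g \<in> J}"

definition ideal_colon :: "'a::comm_ring_1 set \<Rightarrow> 'a \<Rightarrow> 'a set" where
  "ideal_colon I u = {f. f * u \<in> I}"

definition simple_graph :: "'v set set \<Rightarrow> bool" where
  "simple_graph E \<longleftrightarrow> (\<forall>e\<in>E. card e = 2)"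

definition gap_free :: "'v set set \<Rightarrow> bool" where
  "gap_free E \<longleftrightarrow> \<not> (\<exists>e1\<in>E. \<exists>e2\<in>E. e1 \<inter> e2 = {} \<and>
      {e \<in> E. e \<subseteq> e1 \<union> e2} = {e1, e2})"

definition edge_ideal :: "'v set set \<Rightarrow> ('v, 'k::comm_ring_1) mpoly set" where
  "edge_ideal E = ideal_gen {var i * var j | i j. {i, j} \<in> E}"

definition vertex_cover :: "'v set set \<Rightarrow> 'v set \<Rightarrow> bool" where
  "vertex_cover E C \<longleftrightarrow> (\<forall>e\<in>E. e \<inter> C \<noteq> {})"

definition min_vertex_covers :: "'v set set \<Rightarrow> 'v set set" where
  "min_vertex_covers E = {C. vertex_cover E C \<and> (\<forall>D. D \<subset> C \<longrightarrow> \<not> vertex_cover E D)}"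

definition prime_of :: "'v set \<Rightarrow> ('v, 'k::comm_ring_1) mpoly set" where
  "prime_of C = ideal_gen (var ` C)"

definition symbolic_power :: "'v set set \<Rightarrow> nat \<Rightarrow> ('v, 'k::comm_ring_1) mpoly set" where
  "symbolic_power E s = (\<Inter>C\<in>min_vertex_covers E. ideal_pow (prime_of C) s)"

definition min_monomial_gen :: "('v, 'k::comm_ring_1) mpoly set \<Rightarrow> ('v, 'k) mpoly \<Rightarrow> bool" where
  "min_monomial_gen I u \<longleftrightarrow> is_monomial u \<and> u \<in> I \<and>
     (\<forall>v. is_monomial v \<and> v \<in> I \<and> v dvd u \<longrightarrow> v = u)"

end

theory Submission
  imports Defs "HOL-Library.Multiset"
begin

lemma ig_add: "x \<in> ideal_gen A \<Longrightarrow> y \<in> ideal_gen A \<Longrightarrow> x + y \<in> ideal_gen A"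
proof (induction x rule: ideal_gen.induct)
  case zero then show ?case by simp
next
  case (step a f r)
  then have "r * a + (f + y) \<in> ideal_gen A" by (intro ideal_gen.step) auto
  then show ?case by (simp add: add.assoc)
qed

lemma ig_mult: "x \<in> ideal_gen A \<Longrightarrow> r * x \<in> ideal_gen A"
proof (induction x rule: ideal_gen.induct)
  case zero then show ?case by (simp add: ideal_gen.zero)
next
  case (step a f s)
  then have "(r * s) * a + r * f \<in> ideal_gen A" by (intro ideal_gen.step) auto
  then show ?case by (simp add: algebra_simps)
qed

lemma ig_base: "a \<in> A \<Longrightarrow> a \<in> ideal_gen A"
  using ideal_gen.step[of a A 0 1] by (simp add: ideal_gen.zero)

lemma ig_sub: "A \<subseteq> ideal_gen B \<Longrightarrow> ideal_gen A \<subseteq> ideal_gen B"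
proof
  fix x assume A: "A \<subseteq> ideal_gen B" and x: "x \<in> ideal_gen A"
  from x show "x \<in> ideal_gen B"
    by (induction x rule: ideal_gen.induct) (use A in \<open>auto intro: ig_add ig_mult ideal_gen.zero\<close>)
qed

lemma ig_sum: "(\<And>i. i \<in> S \<Longrightarrow> g i \<in> ideal_gen A) \<Longrightarrow> sum g S \<in> ideal_gen A"
  by (induction S rule: infinite_finite_induct) (auto intro: ig_add ideal_gen.zero)

lemma ig_prod:
  "ideal_prod (ideal_gen A) (ideal_gen B) = ideal_gen {a * b | a b. a \<in> A \<and> b \<in> B}"
proof
  show "ideal_gen {a * b | a b. a \<in> A \<and> b \<in> B} \<subseteq> ideal_prod (ideal_gen A) (ideal_gen B)"
    unfolding ideal_prod_def by (rule ig_sub) (auto intro!: ig_base)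
  have *: "a * g \<in> ideal_gen {a * b | a b. a \<in> A \<and> b \<in> B}" if "a \<in> A" "g \<in> ideal_gen B" for a g
    using that(2)
  proof (induction g rule: ideal_gen.induct)
    case zero then show ?case by (simp add: ideal_gen.zero)
  next
    case (step b f s)
    have "s * (a * b) + a * f \<in> ideal_gen {a * b | a b. a \<in> A \<and> b \<in> B}"
      using step that(1) by (intro ideal_gen.step) auto
    then show ?case by (simp add: algebra_simps)
  qed
  have **: "f * g \<in> ideal_gen {a * b | a b. a \<in> A \<and> b \<in> B}" if "f \<in> ideal_gen A" "g \<in> ideal_gen B" for f g
    using that(1)
  proof (induction f rule: ideal_gen.induct)
    case zero then show ?case by (simp add: ideal_gen.zero)
  next
    case (step a f r)
    have "r * (a * g) + f * g \<in> ideal_gen {a * b | a b. a \<in> A \<and> b \<in> B}"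
      using step * that(2) by (intro ig_add ig_mult[of "a * g"]) auto
    then show ?case by (simp add: algebra_simps)
  qed
  show "ideal_prod (ideal_gen A) (ideal_gen B) \<subseteq> ideal_gen {a * b | a b. a \<in> A \<and> b \<in> B}"
    unfolding ideal_prod_def by (rule ig_sub) (auto intro: **)
qed

lemma lookup_mult_monom:
  fixes f :: "('v, 'k::comm_ring_1) mpoly"
  shows "Poly_Mapping.lookup (f * monom c) (a + c) = Poly_Mapping.lookup f a"
proof -
  have inner: "(\<Sum>q. Poly_Mapping.lookup (monom c :: ('v, 'k) mpoly) q when a + c = l + q) = ((1::'k) when l = a)" for l
  proof -
    have "(\<Sum>q. Poly_Mapping.lookup (monom c :: ('v, 'k) mpoly) q when a + c = l + q)
        = (\<Sum>q. ((1::'k) when a + c = l + q) when c = q)"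
      unfolding monom_def lookup_single by (simp add: when_commute)
    also have "\<dots> = ((1::'k) when a + c = l + c)" by (rule Sum_any_when_equal')
    also have "\<dots> = ((1::'k) when l = a)" by (rule when_cong) auto
    finally show ?thesis .
  qed
  have "Poly_Mapping.lookup (f * monom c) (a + c) = (\<Sum>l. Poly_Mapping.lookup f l * ((1::'k) when l = a))"
    unfolding lookup_mult inner ..
  also have "\<dots> = (\<Sum>l. Poly_Mapping.lookup f l when l = a)"
    by (simp add: mult_when)
  also have "\<dots> = Poly_Mapping.lookup f a" by simp
  finally show ?thesis .
qed

lemma keys_monom [simp]: "Poly_Mapping.keys (monom a :: ('v, 'k::comm_ring_1) mpoly) = {a}"
  by (simp add: monom_def)

lemma monom_mult: "(monom a :: ('v, 'k::comm_ring_1) mpoly) * monom b = monom (a + b)"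
  by (simp add: monom_def mult_single)

lemma monom_inj: "(monom a :: ('v, 'k::comm_ring_1) mpoly) = monom b \<longleftrightarrow> a = b"
  by (metis keys_monom singleton_inject)

lemma keys_mult_monom:
  fixes f :: "('v, 'k::comm_ring_1) mpoly"
  shows "Poly_Mapping.keys (f * monom c) = (\<lambda>a. a + c) ` Poly_Mapping.keys f"
proof
  show "Poly_Mapping.keys (f * monom c) \<subseteq> (\<lambda>a. a + c) ` Poly_Mapping.keys f"
    using keys_mult[of f "monom c"] by auto
  show "(\<lambda>a. a + c) ` Poly_Mapping.keys f \<subseteq> Poly_Mapping.keys (f * monom c)"
    by (auto simp: in_keys_iff lookup_mult_monom)
qed

lemma poly_expand:
  fixes f :: "'a \<Rightarrow>\<^sub>0  'b::comm_monoid_add"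
  shows "f = (\<Sum>a\<in>Poly_Mapping.keys f. Poly_Mapping.single a (Poly_Mapping.lookup f a))"
proof (rule poly_mapping_eqI)
  fix k
  show "Poly_Mapping.lookup f k = Poly_Mapping.lookup (\<Sum>a\<in>Poly_Mapping.keys f. Poly_Mapping.single a (Poly_Mapping.lookup f a)) k"
    unfolding lookup_sum lookup_single
    by (cases "k \<in> Poly_Mapping.keys f") (auto simp: when_def in_keys_iff)
qed

definition le_pm :: "('v \<Rightarrow>\<^sub>0 nat) \<Rightarrow> ('v \<Rightarrow>\<^sub>0 nat) \<Rightarrow> bool" where
  "le_pm a b \<longleftrightarrow> (\<forall>i. Poly_Mapping.lookup a i \<le> Poly_Mapping.lookup b i)"

lemma le_pm_diff_add: "le_pm g a \<Longrightarrow> (a - g) + g = a"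
  by (rule poly_mapping_eqI) (simp add: le_pm_def lookup_add minus_poly_mapping.rep_eq)

lemma le_pm_add: "le_pm g (g + b)"
  by (simp add: le_pm_def lookup_add)

lemma le_pm_trans: "le_pm a b \<Longrightarrow> le_pm b c \<Longrightarrow> le_pm a c"
  unfolding le_pm_def using order_trans by blast

definition mono_ideal :: "(('v \<Rightarrow>\<^sub>0 nat) \<Rightarrow> bool) \<Rightarrow> ('v, 'k::comm_ring_1) mpoly set" where
  "mono_ideal P = {f. \<forall>a\<in>Poly_Mapping.keys f. P a}"

lemma ig_monom:
  "ideal_gen (monom ` G :: ('v, 'k::comm_ring_1) mpoly set) = mono_ideal (\<lambda>a. \<exists>g\<in>G. le_pm g a)"
proof
  show "ideal_gen (monom ` G :: ('v, 'k) mpoly set) \<subseteq> mono_ideal (\<lambda>a. \<exists>g\<in>G. le_pm g a)"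
  proof
    fix x :: "('v, 'k) mpoly" assume "x \<in> ideal_gen (monom ` G)"
    then show "x \<in> mono_ideal (\<lambda>a. \<exists>g\<in>G. le_pm g a)"
    proof (induction x rule: ideal_gen.induct)
      case zero then show ?case by (simp add: mono_ideal_def)
    next
      case (step m f r)
      then obtain g where g: "g \<in> G" "m = monom g" by auto
      have "Poly_Mapping.keys (r * m + f) \<subseteq> Poly_Mapping.keys (r * m) \<union> Poly_Mapping.keys f"
        by (rule keys_add)
      moreover have "Poly_Mapping.keys (r * m) = (\<lambda>a. a + g) ` Poly_Mapping.keys r"
        using g keys_mult_monom by blast
      ultimately have "Poly_Mapping.keys (r * m + f) \<subseteq> (\<lambda>a. a + g) ` Poly_Mapping.keys r \<union> Poly_Mapping.keys f"
        by auto
      moreover have "\<exists>g\<in>G. le_pm g (a + g')" if "g' \<in> G" for a g'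
        using that le_pm_add[of g' a] by (auto simp: add.commute)
      ultimately show ?case using step g unfolding mono_ideal_def by blast
    qed
  qed
  show "mono_ideal (\<lambda>a. \<exists>g\<in>G. le_pm g a) \<subseteq> ideal_gen (monom ` G :: ('v, 'k) mpoly set)"
  proof
    fix f :: "('v, 'k) mpoly" assume f: "f \<in> mono_ideal (\<lambda>a. \<exists>g\<in>G. le_pm g a)"
    have "Poly_Mapping.single a (Poly_Mapping.lookup f a) \<in> ideal_gen (monom ` G)"
      if a: "a \<in> Poly_Mapping.keys f" for a
    proof -
      from f a obtain g where g: "g \<in> G" "le_pm g a" by (auto simp: mono_ideal_def)
      have "Poly_Mapping.single a (Poly_Mapping.lookup f a)
          = Poly_Mapping.single (a - g) (Poly_Mapping.lookup f a) * monom g"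
        by (simp add: monom_def mult_single le_pm_diff_add[OF g(2)])
      also have "\<dots> \<in> ideal_gen (monom ` G)"
        using g by (intro ig_mult ig_base) auto
      finally show ?thesis .
    qed
    then have "(\<Sum>a\<in>Poly_Mapping.keys f. Poly_Mapping.single a (Poly_Mapping.lookup f a)) \<in> ideal_gen (monom ` G)"
      by (intro ig_sum)
    then show "f \<in> ideal_gen (monom ` G)" using poly_expand[of f] by simp
  qed
qed

fun pw :: "('v \<Rightarrow>\<^sub>0 nat) set \<Rightarrow> nat \<Rightarrow> ('v \<Rightarrow>\<^sub>0 nat) set" where
  "pw G 0 = {0}"
| "pw G (Suc s) = {a + g | a g. a \<in> pw G s \<and> g \<in> G}"

lemma pow_monom:
  "ideal_pow (ideal_gen (monom ` G :: ('v, 'k::comm_ring_1) mpoly set)) s = ideal_gen (monom ` pw G s)"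
proof (induction s)
  case 0
  have "r \<in> ideal_gen (monom ` {0} :: ('v, 'k) mpoly set)" for r :: "('v, 'k) mpoly"
  proof -
    have "r * monom 0 + 0 \<in> ideal_gen (monom ` {0} :: ('v, 'k) mpoly set)"
      by (intro ideal_gen.step ideal_gen.zero) auto
    then show ?thesis by (simp add: monom_def)
  qed
  then show ?case by auto
next
  case (Suc s)
  have "{a * b | a b. a \<in> monom ` pw G s \<and> b \<in> (monom ` G :: ('v, 'k) mpoly set)}
      = monom ` {a + g | a g. a \<in> pw G s \<and> g \<in> G}" (is "?L = ?R")
  proof
    show "?L \<subseteq> ?R" by (auto simp: monom_mult intro!: imageI) blast
    show "?R \<subseteq> ?L"
    proof
      fix m assume "m \<in> ?R"
      then obtain a g where ag: "m = monom (a + g)" "a \<in> pw G s" "g \<in> G" by auto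
      then have "m = monom a * monom g" by (simp add: monom_mult)
      then show "m \<in> ?L" using ag by blast
    qed
  qed
  then show ?case using Suc by (simp add: ig_prod)
qed

lemma sum_single_delta:
  assumes "finite C" "i \<in> C"
  shows "(\<Sum>j\<in>C. Poly_Mapping.lookup (a + Poly_Mapping.single i 1) j) = (\<Sum>j\<in>C. Poly_Mapping.lookup a j) + 1"
proof -
  have "(\<Sum>j\<in>C. Poly_Mapping.lookup (a + Poly_Mapping.single i 1) j)
      = (\<Sum>j\<in>C. Poly_Mapping.lookup a j) + (\<Sum>j\<in>C. if i = j then 1 else 0)"
    by (simp add: lookup_add lookup_single when_def sum.distrib)
  then show ?thesis using assms by simp
qed

lemma pw_single:
  assumes "finite C"
  shows "(\<exists>g\<in>pw ((\<lambda>i. Poly_Mapping.single i 1) ` C) s. le_pm g a) \<longleftrightarrow> s \<le> (\<Sum>i\<in>C. Poly_Mapping.lookup a i)"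
proof (induction s arbitrary: a)
  case 0
  then show ?case by (simp add: le_pm_def)
next
  case (Suc s)
  show ?case
  proof
    assume "\<exists>g\<in>pw ((\<lambda>i. Poly_Mapping.single i 1) ` C) (Suc s). le_pm g a"
    then obtain g' i where g': "g' \<in> pw ((\<lambda>i. Poly_Mapping.single i 1) ` C) s" and i: "i \<in> C"
      and le: "le_pm (g' + Poly_Mapping.single i 1) a" by auto
    define a' where "a' = a - Poly_Mapping.single i 1"
    have ai: "1 \<le> Poly_Mapping.lookup a i" using le unfolding le_pm_def
      by (metis le_add2 lookup_add lookup_single_eq order_trans)
    have a: "a = a' + Poly_Mapping.single i 1"
      unfolding a'_def using ai
      by (intro poly_mapping_eqI) (auto simp: lookup_add minus_poly_mapping.rep_eq lookup_single when_def)
    have "le_pm g' a'" unfolding le_pm_def a'_def minus_poly_mapping.rep_eq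
    proof
      fix j
      have "Poly_Mapping.lookup g' j + Poly_Mapping.lookup (Poly_Mapping.single i 1) j \<le> Poly_Mapping.lookup a j"
        using le by (simp add: le_pm_def lookup_add)
      then show "Poly_Mapping.lookup g' j \<le> Poly_Mapping.lookup a j - Poly_Mapping.lookup (Poly_Mapping.single i 1) j"
        by linarith
    qed
    then have "s \<le> (\<Sum>i\<in>C. Poly_Mapping.lookup a' i)" using Suc g' by blast
    then show "Suc s \<le> (\<Sum>i\<in>C. Poly_Mapping.lookup a i)"
      using sum_single_delta[OF assms i, of a'] a by simp
  next
    assume s: "Suc s \<le> (\<Sum>i\<in>C. Poly_Mapping.lookup a i)"
    have "\<exists>i\<in>C. 1 \<le> Poly_Mapping.lookup a i"
    proof (rule ccontr)
      assume "\<not> (\<exists>i\<in>C. 1 \<le> Poly_Mapping.lookup a i)"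
      then have "(\<Sum>i\<in>C. Poly_Mapping.lookup a i) = 0" by (intro sum.neutral) auto
      then show False using s by simp
    qed
    then obtain i where i: "i \<in> C" "1 \<le> Poly_Mapping.lookup a i" by blast
    define a' where "a' = a - Poly_Mapping.single i 1"
    have a: "a = a' + Poly_Mapping.single i 1"
      unfolding a'_def using i
      by (intro poly_mapping_eqI) (auto simp: lookup_add minus_poly_mapping.rep_eq lookup_single when_def)
    have "s \<le> (\<Sum>i\<in>C. Poly_Mapping.lookup a' i)"
      using sum_single_delta[OF assms i(1), of a'] a s by simp
    then obtain g' where g': "g' \<in> pw ((\<lambda>i. Poly_Mapping.single i 1) ` C) s" "le_pm g' a'"
      using Suc by blast
    have "g' + Poly_Mapping.single i 1 \<in> pw ((\<lambda>i. Poly_Mapping.single i 1) ` C) (Suc s)"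
      using g' i by auto
    moreover have "le_pm (g' + Poly_Mapping.single i 1) a"
      using g'(2) a by (auto simp: le_pm_def lookup_add)
    ultimately show "\<exists>g\<in>pw ((\<lambda>i. Poly_Mapping.single i 1) ` C) (Suc s). le_pm g a" by blast
  qed
qed

lemma colon_mono:
  "ideal_colon (mono_ideal P :: ('v, 'k::comm_ring_1) mpoly set) (monom c) = mono_ideal (\<lambda>a. P (a + c))"
  unfolding ideal_colon_def mono_ideal_def by (auto simp: keys_mult_monom)

lemma isum_mono:
  "ideal_sum (mono_ideal P :: ('v, 'k::comm_ring_1) mpoly set) (mono_ideal Q) = mono_ideal (\<lambda>a. P a \<or> Q a)"
proof
  show "ideal_sum (mono_ideal P :: ('v, 'k) mpoly set) (mono_ideal Q) \<subseteq> mono_ideal (\<lambda>a. P a \<or> Q a)"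
  proof
    fix f :: "('v, 'k) mpoly" assume "f \<in> ideal_sum (mono_ideal P) (mono_ideal Q)"
    then obtain g h where gh: "f = g + h" "g \<in> mono_ideal P" "h \<in> mono_ideal Q"
      unfolding ideal_sum_def by blast
    have "Poly_Mapping.keys f \<subseteq> Poly_Mapping.keys g \<union> Poly_Mapping.keys h"
      unfolding gh(1) by (rule keys_add)
    then show "f \<in> mono_ideal (\<lambda>a. P a \<or> Q a)" using gh(2,3) unfolding mono_ideal_def by blast
  qed
  show "mono_ideal (\<lambda>a. P a \<or> Q a) \<subseteq> ideal_sum (mono_ideal P :: ('v, 'k) mpoly set) (mono_ideal Q)"
  proof
    fix f :: "('v, 'k) mpoly" assume f: "f \<in> mono_ideal (\<lambda>a. P a \<or> Q a)"
    define h where "h S = (\<Sum>a\<in>S. Poly_Mapping.single a (Poly_Mapping.lookup f a))" for S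
    have kh: "Poly_Mapping.keys (h S) \<subseteq> S" for S
      unfolding h_def using keys_sum[of "\<lambda>a. Poly_Mapping.single a (Poly_Mapping.lookup f a)" S]
      by (auto simp: keys_single split: if_splits)
    have "f = h (Poly_Mapping.keys f)" unfolding h_def by (rule poly_expand)
    also have "\<dots> = h (Poly_Mapping.keys f \<inter> Collect P) + h (Poly_Mapping.keys f - Collect P)"
      unfolding h_def by (rule sum.Int_Diff) simp
    finally have fe: "f = h (Poly_Mapping.keys f \<inter> Collect P) + h (Poly_Mapping.keys f - Collect P)" .
    have "h (Poly_Mapping.keys f \<inter> Collect P) \<in> mono_ideal P"
      using kh unfolding mono_ideal_def by blast
    moreover have "h (Poly_Mapping.keys f - Collect P) \<in> mono_ideal Q"
      using kh f unfolding mono_ideal_def by blast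
    ultimately show "f \<in> ideal_sum (mono_ideal P) (mono_ideal Q)"
      unfolding ideal_sum_def using fe by blast
  qed
qed

lemma var_in_mono: "(var i :: ('v, 'k::comm_ring_1) mpoly) \<in> mono_ideal P \<longleftrightarrow> P (Poly_Mapping.single i 1)"
  by (simp add: var_def mono_ideal_def)

lemma sum_count_list:
  assumes "finite C"
  shows "(\<Sum>v\<in>C. count_list L v) = length (filter (\<lambda>v. v \<in> C) L)"
proof (induction L)
  case Nil then show ?case by simp
next
  case (Cons x L)
  have "(\<Sum>v\<in>C. count_list (x # L) v) = (\<Sum>v\<in>C. (if x = v then 1 else 0) + count_list L v)"
    by (intro sum.cong) auto
  also have "\<dots> = (\<Sum>v\<in>C. (if x = v then 1 else 0)) + (\<Sum>v\<in>C. count_list L v)"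
    by (rule sum.distrib)
  also have "\<dots> = (if x \<in> C then 1 else 0) + length (filter (\<lambda>v. v \<in> C) L)"
    using assms Cons by simp
  finally show ?case by simp
qed

definition two :: "('v \<Rightarrow> nat) \<Rightarrow> 'v \<Rightarrow> 'v \<Rightarrow> bool" where
  "two f y z \<longleftrightarrow> (\<forall>v. count_list [y, z] v \<le> f v)"

lemma two_iff: "two f y z \<longleftrightarrow> (y \<noteq> z \<and> 1 \<le> f y \<and> 1 \<le> f z) \<or> (y = z \<and> 2 \<le> f y)"
proof
  assume "two f y z"
  then have "count_list [y, z] y \<le> f y" "count_list [y, z] z \<le> f z" unfolding two_def by blast+
  then show "(y \<noteq> z \<and> 1 \<le> f y \<and> 1 \<le> f z) \<or> (y = z \<and> 2 \<le> f y)"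
    by (cases "y = z") auto
next
  assume "(y \<noteq> z \<and> 1 \<le> f y \<and> 1 \<le> f z) \<or> (y = z \<and> 2 \<le> f y)"
  then show "two f y z" unfolding two_def by auto
qed

locale cctx =
  fixes E :: "'v::finite set set" and f W :: "'v \<Rightarrow> nat" and a b c d :: 'v
  assumes simple: "simple_graph E"
    and eab: "{a, b} \<in> E" and ecd: "{c, d} \<in> E"
    and Wdef: "\<And>v. W v = f v + count_list [a, b, c, d] v"
    and P4W: "\<And>C. vertex_cover E C \<Longrightarrow> 4 \<le> sum W C"
    and NP: "\<And>x1 y1 x2 y2 x3 y3. {x1,y1} \<in> E \<Longrightarrow> {x2,y2} \<in> E \<Longrightarrow> {x3,y3} \<in> E \<Longrightarrow>
               \<not> (\<forall>v. count_list [x1,y1,x2,y2,x3,y3] v \<le> W v)"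
begin

lemma adj_sym: "{x, y} \<in> E \<longleftrightarrow> {y, x} \<in> E"
  by (simp add: insert_commute)

lemma adj_ne: "{x, y} \<in> E \<Longrightarrow> x \<noteq> y"
proof
  assume "{x, y} \<in> E" "x = y"
  then have "card {x, y} = 2" using simple unfolding simple_graph_def by blast
  then show False using \<open>x = y\<close> by simp
qed

lemma cover:
  assumes "\<And>x y. {x, y} \<in> E \<Longrightarrow> 0 < W x \<Longrightarrow> 0 < W y \<Longrightarrow> x \<in> K \<or> y \<in> K"
  shows "4 \<le> sum W K"
proof -
  define D where "D = K \<union> {v. W v = 0}"
  have "vertex_cover E D"
    unfolding vertex_cover_def
  proof
    fix e assume "e \<in> E"
    then have "card e = 2" using simple unfolding simple_graph_def by blast
    then obtain x y where e: "e = {x, y}" unfolding card_2_iff by blast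
    show "e \<inter> D \<noteq> {}"
      using assms[of x y] \<open>e \<in> E\<close> unfolding e D_def by auto
  qed
  then have "4 \<le> sum W D" by (rule P4W)
  also have "sum W D \<le> sum W K + sum W {v. W v = 0}"
    unfolding D_def by (simp add: sum_Un_nat)
  also have "sum W {v. W v = 0} = 0" by simp
  finally show ?thesis by simp
qed

lemma sumW: "sum W K = sum f K + length (filter (\<lambda>v. v \<in> K) [a, b, c, d])"
proof -
  have "sum W K = (\<Sum>v\<in>K. f v + count_list [a, b, c, d] v)"
    by (rule sum.cong) (simp_all add: Wdef)
  also have "\<dots> = sum f K + (\<Sum>v\<in>K. count_list [a, b, c, d] v)"
    by (rule sum.distrib)
  also have "(\<Sum>v\<in>K. count_list [a, b, c, d] v) = length (filter (\<lambda>v. v \<in> K) [a, b, c, d])"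
    by (rule sum_count_list) simp
  finally show ?thesis .
qed

lemma p3:
  assumes "two f y z" "{e1, e2} \<in> E" "{e3, e4} \<in> E" "{e5, e6} \<in> E"
    and "mset [e1, e2, e3, e4, e5, e6] = mset [y, z, a, b, c, d]"
  shows False
proof -
  have "\<forall>v. count_list [e1, e2, e3, e4, e5, e6] v \<le> W v"
  proof
    fix v
    have "count_list [e1, e2, e3, e4, e5, e6] v = count (mset [e1, e2, e3, e4, e5, e6]) v"
      by (simp only: count_mset)
    also have "\<dots> = count (mset [y, z, a, b, c, d]) v" by (simp only: assms(5))
    also have "\<dots> = count (mset ([y, z] @ [a, b, c, d])) v" by simp
    also have "\<dots> = count_list [y, z] v + count_list [a, b, c, d] v"
      by (simp only: count_mset count_list_append)
    finally have "count_list [e1, e2, e3, e4, e5, e6] v = count_list [y, z] v + count_list [a, b, c, d] v" .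
    moreover have "count_list [y, z] v \<le> f v" using assms(1) unfolding two_def by blast
    ultimately show "count_list [e1, e2, e3, e4, e5, e6] v \<le> W v" by (simp add: Wdef)
  qed
  then show False using NP assms(2-4) by blast
qed

lemma indep: "{x, y} \<in> E \<Longrightarrow> 1 \<le> f x \<Longrightarrow> 1 \<le> f y \<Longrightarrow> False"
proof -
  assume "{x, y} \<in> E" "1 \<le> f x" "1 \<le> f y"
  then have "two f x y" unfolding two_iff using adj_ne[of x y] by simp
  then show False by (rule p3[OF _ \<open>{x, y} \<in> E\<close> eab ecd refl])
qed

lemma fU: "f a = 0 \<and> f b = 0 \<and> f c = 0 \<and> f d = 0"
proof (rule ccontr)
  assume H: "\<not> ?thesis"
  define K where "K = {v \<in> set [a, b, c, d]. f v = 0}"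
  have "4 \<le> sum W K"
  proof (rule cover)
    fix x y assume xy: "{x, y} \<in> E" "0 < W x" "0 < W y"
    show "x \<in> K \<or> y \<in> K"
    proof (rule ccontr)
      assume "\<not> (x \<in> K \<or> y \<in> K)"
      then have "1 \<le> f x" "1 \<le> f y" using xy(2,3) unfolding K_def Wdef by (auto split: if_splits)
      then show False using indep xy(1) by blast
    qed
  qed
  moreover have "sum W K = length (filter (\<lambda>v. f v = 0) [a, b, c, d])"
  proof -
    have "sum f K = 0" unfolding K_def by simp
    moreover have "filter (\<lambda>v. v \<in> K) [a, b, c, d] = filter (\<lambda>v. f v = 0) [a, b, c, d]"
      unfolding K_def by (intro filter_cong) auto
    ultimately show ?thesis by (simp add: sumW)
  qed
  moreover have "length (filter (\<lambda>v. f v = 0) [a, b, c, d]) < length [a, b, c, d]"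
  proof -
    from H obtain v where "v \<in> set [a, b, c, d]" "\<not> f v = 0" by auto
    then show ?thesis by (rule length_filter_less)
  qed
  ultimately show False by simp
qed

end

context cctx begin

lemma pos: "0 < W x \<Longrightarrow> x \<in> {a, b, c, d} \<or> 1 \<le> f x"
  by (auto simp: Wdef split: if_splits)

lemma Woff: "x \<notin> {a, b, c, d} \<Longrightarrow> W x = f x"
  by (auto simp: Wdef)

lemma case1:
  assumes cd: "c = a" "d = b"
  shows False
proof -
  have f0: "f a = 0" "f b = 0" using fU by auto
  have ab: "a \<noteq> b" using adj_ne eab by blast
  have Wa: "W a = 2" "W b = 2" using cd f0 ab by (simp_all add: Wdef)
  have pos1: "x = a \<or> x = b \<or> 1 \<le> f x" if "0 < W x" for x
    using pos[OF that] cd by auto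
  have AB: "y = z \<and> f y = 1" if "{a, y} \<in> E" "1 \<le> f y" "{b, z} \<in> E" "1 \<le> f z" for y z
  proof (rule ccontr)
    assume H: "\<not> (y = z \<and> f y = 1)"
    have "two f y z" unfolding two_iff using H that(2,4) by auto
    moreover have "{y, a} \<in> E" "{z, b} \<in> E" using that(1,3) adj_sym by auto
    moreover have "mset [y, a, z, b, a, b] = mset [y, z, a, b, c, d]" using cd by (simp add: add_mset_commute)
    ultimately show False using p3 eab by blast
  qed
  show False
  proof (cases "\<exists>z. {b, z} \<in> E \<and> 1 \<le> f z")
    case False
    have "4 \<le> sum W {a}"
    proof (rule cover)
      fix x y assume xy: "{x, y} \<in> E" "0 < W x" "0 < W y"
      show "x \<in> {a} \<or> y \<in> {a}"
      proof (rule ccontr)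
        assume N: "\<not> (x \<in> {a} \<or> y \<in> {a})"
        then have "(x = b \<or> 1 \<le> f x) \<and> (y = b \<or> 1 \<le> f y)" using pos1 xy(2,3) by auto
        then show False using indep[OF xy(1)] adj_ne[OF xy(1)] False xy(1) adj_sym by metis
      qed
    qed
    then show False using Wa by simp
  next
    case True
    then obtain yb where yb: "{b, yb} \<in> E" "1 \<le> f yb" by blast
    show False
    proof (cases "\<exists>z. {a, z} \<in> E \<and> 1 \<le> f z")
      case False
      have "4 \<le> sum W {b}"
      proof (rule cover)
        fix x y assume xy: "{x, y} \<in> E" "0 < W x" "0 < W y"
        show "x \<in> {b} \<or> y \<in> {b}"
        proof (rule ccontr)
          assume N: "\<not> (x \<in> {b} \<or> y \<in> {b})"
          then have "(x = a \<or> 1 \<le> f x) \<and> (y = a \<or> 1 \<le> f y)" using pos1 xy(2,3) by auto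
          then show False using indep[OF xy(1)] adj_ne[OF xy(1)] False xy(1) adj_sym by metis
        qed
      qed
      then show False using Wa by simp
    next
      case True
      then obtain ya where ya: "{a, ya} \<in> E" "1 \<le> f ya" by blast
      from AB[OF ya yb] have yab: "ya = yb" "f ya = 1" by auto
      have NB: "z = ya" if "{b, z} \<in> E" "1 \<le> f z" for z
        using AB[OF ya that] by simp
      have yaU: "ya \<noteq> a" "ya \<noteq> b" using yab f0 by auto
      have Wya: "W ya = 1" using yaU yab cd by (simp add: Wdef)
      have "4 \<le> sum W {a, ya}"
      proof (rule cover)
        fix x y assume xy: "{x, y} \<in> E" "0 < W x" "0 < W y"
        show "x \<in> {a, ya} \<or> y \<in> {a, ya}"
        proof (rule ccontr)
          assume N: "\<not> (x \<in> {a, ya} \<or> y \<in> {a, ya})"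
          then have X: "(x = b \<or> 1 \<le> f x) \<and> (y = b \<or> 1 \<le> f y)" using pos1 xy(2,3) by auto
          have "{y, x} \<in> E" using xy(1) adj_sym by blast
          then show False using X N indep[OF xy(1)] adj_ne[OF xy(1)] NB xy(1) by auto
        qed
      qed
      moreover have "sum W {a, ya} = 3" using yaU Wa Wya by simp
      ultimately show False by simp
    qed
  qed
qed

lemma case2:
  assumes cd: "c = a" and bd: "b \<noteq> d"
  shows False
proof -
  have f0: "f a = 0" "f b = 0" "f d = 0" using fU by auto
  have ab: "a \<noteq> b" using adj_ne eab by blast
  have ad: "a \<noteq> d" using adj_ne ecd cd by blast
  have Wa: "W a = 2" "W b = 1" "W d = 1" using cd f0 ab ad bd by (simp_all add: Wdef)
  have pos1: "x = a \<or> x = b \<or> x = d \<or> 1 \<le> f x" if "0 < W x" for x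
    using pos[OF that] cd by auto
  have ead: "{a, d} \<in> E" using ecd cd by simp
  have AB: "\<not> two f y z" if "{a, y} \<in> E" "{b, z} \<in> E" for y z
  proof
    assume "two f y z"
    moreover have "{y, a} \<in> E" "{z, b} \<in> E" using that adj_sym by auto
    moreover have "mset [y, a, z, b, a, d] = mset [y, z, a, b, c, d]" using cd by (simp add: add_mset_commute)
    ultimately show False using p3 ead by blast
  qed
  show False
  proof (cases "\<exists>z. {a, z} \<in> E \<and> 1 \<le> f z")
    case False
    have "4 \<le> sum W {b, d}"
    proof (rule cover)
      fix x y assume xy: "{x, y} \<in> E" "0 < W x" "0 < W y"
      show "x \<in> {b, d} \<or> y \<in> {b, d}"
      proof (rule ccontr)
        assume N: "\<not> (x \<in> {b, d} \<or> y \<in> {b, d})"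
        then have X: "(x = a \<or> 1 \<le> f x) \<and> (y = a \<or> 1 \<le> f y)" using pos1 xy(2,3) by auto
        have "{y, x} \<in> E" using xy(1) adj_sym by blast
        then show False using X indep[OF xy(1)] adj_ne[OF xy(1)] False xy(1) by auto
      qed
    qed
    then show False using Wa bd by simp
  next
    case True
    then obtain ya where ya: "{a, ya} \<in> E" "1 \<le> f ya" by blast
    have nb: "\<exists>z. {t, z} \<in> E \<and> 1 \<le> f z" if t: "t = b \<or> t = d" for t
    proof (rule ccontr)
      assume F: "\<not> (\<exists>z. {t, z} \<in> E \<and> 1 \<le> f z)"
      define t' where "t' = (if t = b then d else b)"
      have t': "t' = b \<or> t' = d" "t' \<noteq> t" using t bd unfolding t'_def by auto
      have "4 \<le> sum W {a, t'}"
      proof (rule cover)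
        fix x y assume xy: "{x, y} \<in> E" "0 < W x" "0 < W y"
        show "x \<in> {a, t'} \<or> y \<in> {a, t'}"
        proof (rule ccontr)
          assume N: "\<not> (x \<in> {a, t'} \<or> y \<in> {a, t'})"
          then have X: "(x = t \<or> 1 \<le> f x) \<and> (y = t \<or> 1 \<le> f y)" using pos1 xy(2,3) t t' by auto
          have "{y, x} \<in> E" using xy(1) adj_sym by blast
          then show False using X indep[OF xy(1)] adj_ne[OF xy(1)] F xy(1) by auto
        qed
      qed
      moreover have "sum W {a, t'} = 3" using t' Wa ab ad by auto
      ultimately show False by simp
    qed
    obtain yb where yb: "{b, yb} \<in> E" "1 \<le> f yb" using nb by blast
    show False
    proof (cases "(\<forall>z. {a, z} \<in> E \<longrightarrow> 1 \<le> f z \<longrightarrow> z = ya) \<and> f ya = 1")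
      case True
      have yaU: "ya \<noteq> a" "ya \<noteq> b" "ya \<noteq> d" using True f0 by auto
      have Wya: "W ya = 1" using yaU True cd by (simp add: Wdef)
      have "4 \<le> sum W {b, d, ya}"
      proof (rule cover)
        fix x y assume xy: "{x, y} \<in> E" "0 < W x" "0 < W y"
        show "x \<in> {b, d, ya} \<or> y \<in> {b, d, ya}"
        proof (rule ccontr)
          assume N: "\<not> (x \<in> {b, d, ya} \<or> y \<in> {b, d, ya})"
          then have X: "(x = a \<or> 1 \<le> f x) \<and> (y = a \<or> 1 \<le> f y)" using pos1 xy(2,3) by auto
          have "{y, x} \<in> E" using xy(1) adj_sym by blast
          then show False using X N indep[OF xy(1)] adj_ne[OF xy(1)] True xy(1) by auto
        qed
      qed
      moreover have "sum W {b, d, ya} = 3" using yaU Wa Wya bd by simp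
      ultimately show False by simp
    next
      case False
      have "\<exists>z. {a, z} \<in> E \<and> two f z yb"
      proof (cases "two f ya yb")
        case True then show ?thesis using ya by blast
      next
        case False
        then have "ya = yb" "f ya = 1" using ya(2) yb(2) unfolding two_iff by auto
        with \<open>\<not> ((\<forall>z. {a, z} \<in> E \<longrightarrow> 1 \<le> f z \<longrightarrow> z = ya) \<and> f ya = 1)\<close>
        obtain z where "{a, z} \<in> E" "1 \<le> f z" "z \<noteq> ya" by blast
        then show ?thesis unfolding two_iff using \<open>ya = yb\<close> yb(2) by auto
      qed
      then obtain z where "{a, z} \<in> E" "two f z yb" by blast
      then show False using AB yb(1) by blast
    qed
  qed
qed

end

lemma k5:
  assumes "vertex_cover E C"
    and "{y,a} \<in> E" "{y,b} \<in> E" "{y,c} \<in> E" "{y,d} \<in> E" "{a,b} \<in> E" "{a,c} \<in> E"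
        "{a,d} \<in> E" "{b,c} \<in> E" "{b,d} \<in> E" "{c,d} \<in> E"
  shows "4 \<le> length (filter (\<lambda>v. v \<in> C) [y, a, b, c, d])"
proof -
  have cv: "x \<in> C \<or> z \<in> C" if "{x, z} \<in> E" for x z
  proof -
    from assms(1) that have "{x, z} \<inter> C \<noteq> {}" unfolding vertex_cover_def by (rule bspec)
    then show ?thesis by auto
  qed
  note h = cv[OF assms(2)] cv[OF assms(3)] cv[OF assms(4)] cv[OF assms(5)] cv[OF assms(6)]
    cv[OF assms(7)] cv[OF assms(8)] cv[OF assms(9)] cv[OF assms(10)] cv[OF assms(11)]
  show ?thesis
  proof (cases "y \<in> C")
    case True
    then show ?thesis using h
      by (cases "a \<in> C"; cases "b \<in> C"; cases "c \<in> C"; cases "d \<in> C") simp_all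
  next
    case False
    then have "a \<in> C" "b \<in> C" "c \<in> C" "d \<in> C" using h by auto
    then show ?thesis by simp
  qed
qed

context cctx begin

lemma case3:
  assumes dist: "distinct [a, b, c, d]" and gap: "gap_free E"
    and noX: "\<forall>i. 1 \<le> f i \<longrightarrow> \<not> (\<forall>C. vertex_cover E C \<longrightarrow> 4 \<le> (\<Sum>v\<in>C. count_list [i, a, b, c, d] v))"
  shows False
proof -
  have f0: "f a = 0" "f b = 0" "f c = 0" "f d = 0" using fU by auto
  have W1: "W a = 1" "W b = 1" "W c = 1" "W d = 1" using dist f0 by (auto simp: Wdef)
  have C1: "\<exists>y. {t, y} \<in> E \<and> 1 \<le> f y" if t: "t \<in> {a, b, c, d}" for t
  proof (rule ccontr)
    assume F: "\<not> (\<exists>y. {t, y} \<in> E \<and> 1 \<le> f y)"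
    have "4 \<le> sum W ({a, b, c, d} - {t})"
    proof (rule cover)
      fix x y assume xy: "{x, y} \<in> E" "0 < W x" "0 < W y"
      show "x \<in> {a, b, c, d} - {t} \<or> y \<in> {a, b, c, d} - {t}"
      proof (rule ccontr)
        assume N: "\<not> ?thesis"
        then have X: "(x = t \<or> 1 \<le> f x) \<and> (y = t \<or> 1 \<le> f y)" using pos[OF xy(2)] pos[OF xy(3)] by auto
        have "{y, x} \<in> E" using xy(1) adj_sym by blast
        then show False using X indep[OF xy(1)] adj_ne[OF xy(1)] F xy(1) by auto
      qed
    qed
    moreover have "sum W ({a, b, c, d} - {t}) = 3"
    proof -
      have s4: "sum W {a, b, c, d} = 4" using dist W1 by simp
      have wt: "W t = 1" using t W1 by auto
      show ?thesis using t s4 wt by (simp add: sum_diff1_nat)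
    qed
    ultimately show False by simp
  qed
  obtain ya where ya: "{a, ya} \<in> E" "1 \<le> f ya" using C1[of a] by auto
  obtain yb where yb: "{b, yb} \<in> E" "1 \<le> f yb" using C1[of b] by auto
  obtain yc where yc: "{c, yc} \<in> E" "1 \<le> f yc" using C1[of c] by auto
  obtain yd where yd: "{d, yd} \<in> E" "1 \<le> f yd" using C1[of d] by auto
  have AB: "y = z \<and> f y = 1" if "{a, y} \<in> E" "1 \<le> f y" "{b, z} \<in> E" "1 \<le> f z" for y z
  proof (rule ccontr)
    assume H: "\<not> (y = z \<and> f y = 1)"
    have t: "two f y z" unfolding two_iff using H that(2,4) by auto
    have e: "{y, a} \<in> E" "{z, b} \<in> E" using that(1,3) adj_sym by auto
    have m: "mset [y, a, z, b, c, d] = mset [y, z, a, b, c, d]" by (simp add: add_mset_commute)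
    show False by (rule p3[OF t e(1) e(2) ecd m])
  qed
  have CD: "y = z \<and> f y = 1" if "{c, y} \<in> E" "1 \<le> f y" "{d, z} \<in> E" "1 \<le> f z" for y z
  proof (rule ccontr)
    assume H: "\<not> (y = z \<and> f y = 1)"
    have t: "two f y z" unfolding two_iff using H that(2,4) by auto
    have e: "{y, c} \<in> E" "{z, d} \<in> E" using that(1,3) adj_sym by auto
    have m: "mset [a, b, y, c, z, d] = mset [y, z, a, b, c, d]" by (simp add: add_mset_commute)
    show False by (rule p3[OF t eab e(1) e(2) m])
  qed
  from AB[OF ya yb] have yab: "ya = yb" "f ya = 1" by auto
  from CD[OF yc yd] have ycd: "yc = yd" "f yc = 1" by auto
  have NA: "z = ya" if "{a, z} \<in> E" "1 \<le> f z" for z using AB[OF that yb] yab by simp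
  have NB: "z = ya" if "{b, z} \<in> E" "1 \<le> f z" for z using AB[OF ya that] by simp
  have NC: "z = yc" if "{c, z} \<in> E" "1 \<le> f z" for z using CD[OF that yd] ycd by simp
  have ND: "z = yc" if "{d, z} \<in> E" "1 \<le> f z" for z using CD[OF yc that] by simp
  have yaU: "ya \<notin> {a, b, c, d}" using yab f0 by auto
  have ycU: "yc \<notin> {a, b, c, d}" using ycd f0 by auto
  show False
  proof (cases "ya = yc")
    case True
    have gen: False if pq: "{p, q} \<notin> E" "p \<in> {a, b}" "q \<in> {c, d}" "p' \<in> {a, b}" "q' \<in> {c, d}"
      "p \<noteq> p'" "q \<noteq> q'" for p q p' q'
    proof -
      have Np: "z = ya" if "{p, z} \<in> E" "1 \<le> f z" for z using pq(2) NA NB that by auto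
      have Nq: "z = ya" if "{q, z} \<in> E" "1 \<le> f z" for z using pq(3) NC ND that True by auto
      have U: "x = p \<or> x = q" if "x \<in> {a, b, c, d}" "x \<noteq> p'" "x \<noteq> q'" for x
        using that pq(2-7) by auto
      have "4 \<le> sum W {p', q', ya}"
      proof (rule cover)
        fix x y assume xy: "{x, y} \<in> E" "0 < W x" "0 < W y"
        show "x \<in> {p', q', ya} \<or> y \<in> {p', q', ya}"
        proof (rule ccontr)
          assume N: "\<not> ?thesis"
          then have X: "(x = p \<or> x = q \<or> 1 \<le> f x) \<and> (y = p \<or> y = q \<or> 1 \<le> f y)"
            using pos[OF xy(2)] pos[OF xy(3)] U by blast
          have yx: "{y, x} \<in> E" using xy(1) adj_sym by blast
          have xya: "x \<noteq> ya" "y \<noteq> ya" using N by auto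
          have qp: "{q, p} \<notin> E" using pq(1) adj_sym by blast
          show False
          proof (cases "x = p")
            case True
            then show False using X adj_ne[OF xy(1)] pq(1) xy(1) Np[of y] xya by auto
          next
            case xp: False
            show False
            proof (cases "x = q")
              case True
              then show False using X adj_ne[OF xy(1)] qp xy(1) Nq[of y] xya by auto
            next
              case False
              then have fx: "1 \<le> f x" using X xp by auto
              show False
              proof (cases "y = p")
                case True then show False using Np[of x] yx fx xya by auto
              next
                case False
                then show False using X fx Nq[of x] yx xya indep[OF xy(1)] by auto
              qed
            qed
          qed
        qed
      qed
      moreover have "sum W {p', q', ya} = 3"
      proof -
        have "p' \<noteq> q'" using pq(4,5) dist by auto
        moreover have "ya \<noteq> p'" "ya \<noteq> q'" using yaU pq(4,5) by auto
        moreover have "W p' = 1" "W q' = 1" using pq(4,5) W1 by auto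
        moreover have "W ya = 1" using Woff[OF yaU] yab by simp
        ultimately show ?thesis by simp
      qed
      ultimately show False by simp
    qed
    show False
    proof (cases "{a, c} \<in> E \<and> {a, d} \<in> E \<and> {b, c} \<in> E \<and> {b, d} \<in> E")
      case K4: True
      have "\<forall>C. vertex_cover E C \<longrightarrow> 4 \<le> (\<Sum>v\<in>C. count_list [ya, a, b, c, d] v)"
      proof (intro allI impI)
        fix C assume "vertex_cover E C"
        moreover have "{ya, a} \<in> E" "{ya, b} \<in> E" "{ya, c} \<in> E" "{ya, d} \<in> E"
          using ya yb yc yd yab ycd True adj_sym by auto
        ultimately have "4 \<le> length (filter (\<lambda>v. v \<in> C) [ya, a, b, c, d])"
          using K4 by (intro k5) (auto intro: eab ecd)
        moreover have "finite C" by simp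
        ultimately show "4 \<le> (\<Sum>v\<in>C. count_list [ya, a, b, c, d] v)"
          by (simp only: sum_count_list)
      qed
      moreover have "1 \<le> f ya" using yab by simp
      ultimately show False using noX by blast
    next
      case False
      then show False using gen[of a c b d] gen[of a d b c] gen[of b c a d] gen[of b d a c] dist by auto
    qed
  next
    case False
    have two: "two f ya yc" unfolding two_iff using False yab ycd by auto
    have eya: "{ya, a} \<in> E" "{ya, b} \<in> E" using ya yb yab adj_sym by auto
    have eyc: "{yc, c} \<in> E" "{yc, d} \<in> E" using yc yd ycd adj_sym by auto
    have nbd: "{b, d} \<notin> E"
    proof
      assume e: "{b, d} \<in> E"
      have m: "mset [ya, a, yc, c, b, d] = mset [ya, yc, a, b, c, d]" by (simp add: add_mset_commute)
      show False by (rule p3[OF two eya(1) eyc(1) e m])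
    qed
    have nbc: "{b, c} \<notin> E"
    proof
      assume e: "{b, c} \<in> E"
      have m: "mset [ya, a, yc, d, b, c] = mset [ya, yc, a, b, c, d]" by (simp add: add_mset_commute)
      show False by (rule p3[OF two eya(1) eyc(2) e m])
    qed
    have nad: "{a, d} \<notin> E"
    proof
      assume e: "{a, d} \<in> E"
      have m: "mset [ya, b, yc, c, a, d] = mset [ya, yc, a, b, c, d]" by (simp add: add_mset_commute)
      show False by (rule p3[OF two eya(2) eyc(1) e m])
    qed
    have nac: "{a, c} \<notin> E"
    proof
      assume e: "{a, c} \<in> E"
      have m: "mset [ya, b, yc, d, a, c] = mset [ya, yc, a, b, c, d]" by (simp add: add_mset_commute)
      show False by (rule p3[OF two eya(2) eyc(2) e m])
    qed
    have "{e \<in> E. e \<subseteq> {a, b} \<union> {c, d}} = {{a, b}, {c, d}}"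
    proof
      show "{{a, b}, {c, d}} \<subseteq> {e \<in> E. e \<subseteq> {a, b} \<union> {c, d}}" using eab ecd by auto
      show "{e \<in> E. e \<subseteq> {a, b} \<union> {c, d}} \<subseteq> {{a, b}, {c, d}}"
      proof
        fix e assume e: "e \<in> {e \<in> E. e \<subseteq> {a, b} \<union> {c, d}}"
        then have "card e = 2" using simple unfolding simple_graph_def by blast
        then obtain x y where xy: "e = {x, y}" "x \<noteq> y" unfolding card_2_iff by blast
        have "x \<in> {a, b, c, d}" "y \<in> {a, b, c, d}" using e xy by auto
        moreover have "{x, y} \<in> E" using e xy by auto
        ultimately show "e \<in> {{a, b}, {c, d}}"
          using xy nbd nbc nad nac adj_sym by (auto simp: insert_commute)
      qed
    qed
    moreover have "{a, b} \<inter> {c, d} = {}" using dist by auto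
    ultimately have "{a, b} \<inter> {c, d} = {} \<and> {e \<in> E. e \<subseteq> {a, b} \<union> {c, d}} = {{a, b}, {c, d}}"
      by (rule conjI[rotated])
    then have "\<exists>e1\<in>E. \<exists>e2\<in>E. e1 \<inter> e2 = {} \<and> {e \<in> E. e \<subseteq> e1 \<union> e2} = {e1, e2}"
      by (intro bexI[where x="{a, b}"] bexI[where x="{c, d}"] eab ecd)
    then show False using gap unfolding gap_free_def by (rule notE[rotated])
  qed
qed

end

definition ex :: "'v list \<Rightarrow> ('v \<Rightarrow>\<^sub>0 nat)" where
  "ex xs = sum_list (map (\<lambda>i. Poly_Mapping.single i 1) xs)"

lemma lookup_ex: "Poly_Mapping.lookup (ex xs) v = count_list xs v"
  by (induction xs) (auto simp: ex_def lookup_add lookup_single when_def)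

lemma ex_Nil [simp]: "ex [] = 0"
  by (simp add: ex_def)

lemma ex_append: "ex (xs @ ys) = ex xs + ex ys"
  by (simp add: ex_def)

lemma ex_Cons: "ex (x # xs) = Poly_Mapping.single x 1 + ex xs"
  by (simp add: ex_def)

definition GE :: "'v set set \<Rightarrow> ('v \<Rightarrow>\<^sub>0 nat) set" where
  "GE E = {ex [i, j] | i j. {i, j} \<in> E}"

lemma edge_ideal_mono:
  "(edge_ideal E :: ('v, 'k::comm_ring_1) mpoly set) = ideal_gen (monom ` GE E)"
proof -
  have "{var i * var j | i j. {i, j} \<in> E} = (monom ` GE E :: ('v, 'k) mpoly set)"
    by (auto simp: GE_def var_def monom_mult ex_def intro!: imageI)
  then show ?thesis by (simp add: edge_ideal_def)
qed

lemma edge_pow: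
  "(ideal_pow (edge_ideal E) s :: ('v, 'k::comm_ring_1) mpoly set) = mono_ideal (\<lambda>a. \<exists>g\<in>pw (GE E) s. le_pm g a)"
  unfolding edge_ideal_mono pow_monom by (rule ig_monom)

lemma prime_pow:
  fixes C :: "'v::finite set"
  shows "(ideal_pow (prime_of C) s :: ('v, 'k::comm_ring_1) mpoly set)
     = mono_ideal (\<lambda>a. s \<le> (\<Sum>i\<in>C. Poly_Mapping.lookup a i))"
proof -
  have fC: "finite C" by simp
  have vc: "var ` C = (monom ` ((\<lambda>i. Poly_Mapping.single i 1) ` C) :: ('v, 'k) mpoly set)"
    by (auto simp: var_def)
  show ?thesis
    unfolding prime_of_def vc pow_monom unfolding ig_monom pw_single[OF fC] ..
qed

lemma symb_mono:
  "(symbolic_power E s :: ('v::finite, 'k::comm_ring_1) mpoly set)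
     = mono_ideal (\<lambda>a. \<forall>C\<in>min_vertex_covers E. s \<le> (\<Sum>i\<in>C. Poly_Mapping.lookup a i))"
  unfolding symbolic_power_def prime_pow mono_ideal_def by auto

lemma cover_min:
  fixes D :: "'v::finite set"
  shows "vertex_cover E D \<Longrightarrow> \<exists>C\<in>min_vertex_covers E. C \<subseteq> D"
proof (induction "card D" arbitrary: D rule: less_induct)
  case less
  show ?case
  proof (cases "D \<in> min_vertex_covers E")
    case True then show ?thesis by blast
  next
    case False
    then obtain D' where D': "D' \<subset> D" "vertex_cover E D'"
      using less.prems unfolding min_vertex_covers_def by blast
    then have "card D' < card D" by (simp add: psubset_card_mono)
    then obtain C where "C \<in> min_vertex_covers E" "C \<subseteq> D'" using less D' by blast
    then show ?thesis using D' by blast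
  qed
qed

lemma cov_equiv:
  fixes w :: "'v::finite \<Rightarrow> nat"
  shows "(\<forall>C\<in>min_vertex_covers E. k \<le> sum w C) \<longleftrightarrow> (\<forall>D. vertex_cover E D \<longrightarrow> k \<le> sum w D)"
proof
  assume H: "\<forall>C\<in>min_vertex_covers E. k \<le> sum w C"
  show "\<forall>D. vertex_cover E D \<longrightarrow> k \<le> sum w D"
  proof (intro allI impI)
    fix D assume "vertex_cover E D"
    then obtain C where "C \<in> min_vertex_covers E" "C \<subseteq> D" using cover_min by blast
    then have "k \<le> sum w C" "sum w C \<le> sum w D" using H by (auto intro: sum_mono2)
    then show "k \<le> sum w D" by linarith
  qed
next
  assume "\<forall>D. vertex_cover E D \<longrightarrow> k \<le> sum w D"
  then show "\<forall>C\<in>min_vertex_covers E. k \<le> sum w C" by (auto simp: min_vertex_covers_def)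
qed

lemma core:
  fixes f :: "'v::finite \<Rightarrow> nat" and E :: "'v set set"
  assumes simple: "simple_graph E" and gap: "gap_free E" and epq: "{p,q} \<in> E" and ers: "{r,s} \<in> E"
  and P4: "\<forall>C. vertex_cover E C \<longrightarrow> 4 \<le> (\<Sum>v\<in>C. f v + count_list [p,q,r,s] v)"
  and noX: "\<forall>i. 1 \<le> f i \<longrightarrow> \<not> (\<forall>C. vertex_cover E C \<longrightarrow> 4 \<le> (\<Sum>v\<in>C. count_list [i,p,q,r,s] v))"
  shows "\<exists>x1 y1 x2 y2 x3 y3. {x1,y1} \<in> E \<and> {x2,y2} \<in> E \<and> {x3,y3} \<in> E \<and>
           (\<forall>v. count_list [x1,y1,x2,y2,x3,y3] v \<le> f v + count_list [p,q,r,s] v)"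
proof (rule ccontr)
  assume NP0: "\<not> ?thesis"
  define W where "W v = f v + count_list [p,q,r,s] v" for v
  have mk: "cctx E f W a b c d"
    if ab: "{a,b} \<in> E" and cd: "{c,d} \<in> E" and cnt: "\<And>v. count_list [p,q,r,s] v = count_list [a,b,c,d] v"
    for a b c d
  proof
    show "simple_graph E" by (rule simple)
    show "{a,b} \<in> E" by (rule ab)
    show "{c,d} \<in> E" by (rule cd)
    show "W v = f v + count_list [a,b,c,d] v" for v unfolding W_def cnt ..
    show "4 \<le> sum W C" if "vertex_cover E C" for C
      using P4 that unfolding W_def by blast
    show "\<not> (\<forall>v. count_list [x1,y1,x2,y2,x3,y3] v \<le> W v)"
      if "{x1,y1} \<in> E" "{x2,y2} \<in> E" "{x3,y3} \<in> E" for x1 y1 x2 y2 x3 y3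
      using NP0 that unfolding W_def by blast
  qed
  have c2: "card {p, q} = 2" "card {r, s} = 2" using epq ers simple unfolding simple_graph_def by blast+
  have pq: "p \<noteq> q" "r \<noteq> s" using c2 by auto
  show False
  proof (cases "p = r")
    case pr: True
    show False
    proof (cases "q = s")
      case True
      have "cctx E f W p q p q" using mk[of p q p q] epq pr True by simp
      then show False by (rule cctx.case1) simp_all
    next
      case False
      have "cctx E f W p q p s" using mk[of p q p s] epq ers pr by simp
      then show False by (rule cctx.case2) (use False in simp_all)
    qed
  next
    case pr: False
    show False
    proof (cases "p = s")
      case ps: True
      show False
      proof (cases "q = r")
        case True
        have "cctx E f W p q p q" using mk[of p q p q] epq ps True by auto
        then show False by (rule cctx.case1) simp_all
      next
        case False
        have "{p, r} \<in> E" using ers ps by (simp add: insert_commute)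
        then have "cctx E f W p q p r" using mk[of p q p r] epq ps by auto
        then show False by (rule cctx.case2) (use False in simp_all)
      qed
    next
      case ps: False
      show False
      proof (cases "q = r")
        case True
        have "{q, p} \<in> E" using epq by (simp add: insert_commute)
        then have "cctx E f W q p q s" using mk[of q p q s] ers True by auto
        then show False by (rule cctx.case2) (use True pq ps in simp_all)
      next
        case qr: False
        show False
        proof (cases "q = s")
          case True
          have "{q, p} \<in> E" "{q, r} \<in> E" using epq ers True by (simp_all add: insert_commute)
          then have "cctx E f W q p q r" using mk[of q p q r] True by auto
          then show False by (rule cctx.case2) (use pr in simp_all)
        next
          case False
          have "cctx E f W p q r s" using mk[of p q r s] epq ers by simp
          then show False by (rule cctx.case3) (use pq pr ps qr False gap noX in simp_all)
        qed
      qed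
    qed
  qed
qed

lemma u_form:
  fixes u :: "('v, 'k::comm_ring_1) mpoly"
  assumes "min_monomial_gen (ideal_pow (edge_ideal E) 2) u"
  shows "\<exists>p q r s. {p,q} \<in> E \<and> {r,s} \<in> E \<and> u = monom (ex [p,q,r,s])"
proof -
  from assms obtain c where c: "u = monom c" "u \<in> ideal_pow (edge_ideal E) 2"
    and min: "\<forall>v. is_monomial v \<and> v \<in> ideal_pow (edge_ideal E) 2 \<and> v dvd u \<longrightarrow> v = u"
    unfolding min_monomial_gen_def is_monomial_def by blast
  then have "c \<in> Poly_Mapping.keys u" by simp
  with c(2) obtain g where g: "g \<in> pw (GE E) 2" "le_pm g c"
    unfolding edge_pow mono_ideal_def by blast
  have "(monom g :: ('v, 'k) mpoly) \<in> ideal_pow (edge_ideal E) 2"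
    unfolding edge_pow mono_ideal_def using g(1) by (auto simp: le_pm_def)
  moreover have "(monom g :: ('v, 'k) mpoly) dvd u"
  proof
    show "u = monom g * monom (c - g)"
      using le_pm_diff_add[OF g(2)] c(1) by (simp add: monom_mult add.commute)
  qed
  ultimately have "(monom g :: ('v, 'k) mpoly) = u" using min unfolding is_monomial_def by blast
  then have "g = c" using c(1) monom_inj by blast
  from g(1) obtain p q r s where "g = 0 + ex [p,q] + ex [r,s]" "{p,q} \<in> E" "{r,s} \<in> E"
    by (auto simp: GE_def numeral_2_eq_2)
  then show ?thesis using \<open>g = c\<close> c(1) ex_append[of "[p,q]" "[r,s]"]
    by (intro exI[of _ p] exI[of _ q] exI[of _ r] exI[of _ s]) auto
qed

lemma P3_from:
  assumes "{x1,y1} \<in> E" "{x2,y2} \<in> E" "{x3,y3} \<in> E"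
    and "\<forall>v. count_list [x1,y1,x2,y2,x3,y3] v \<le> Poly_Mapping.lookup b v"
  shows "\<exists>g\<in>pw (GE E) 3. le_pm g b"
proof
  show "0 + ex [x1,y1] + ex [x2,y2] + ex [x3,y3] \<in> pw (GE E) 3"
    using assms by (auto simp: GE_def numeral_3_eq_3) blast
  have "0 + ex [x1,y1] + ex [x2,y2] + ex [x3,y3] = ex [x1,y1,x2,y2,x3,y3]"
    by (simp add: ex_Cons add.assoc)
  then show "le_pm (0 + ex [x1,y1] + ex [x2,y2] + ex [x3,y3]) b"
    using assms(4) by (simp add: le_pm_def lookup_ex)
qed

theorem lemma4p1:
  fixes E :: "'v::finite set set"
    and u :: "('v, 'k::field) mpoly"
  assumes "simple_graph E"
    and "gap_free E"
    and "min_monomial_gen (ideal_pow (edge_ideal E) 2) u"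
  shows "ideal_sum (ideal_colon (symbolic_power E 4) u) (ideal_colon (ideal_pow (edge_ideal E) 3) u)
       = ideal_sum (ideal_colon (ideal_pow (edge_ideal E) 3) u)
           (ideal_gen {var i | i. var i \<in> ideal_colon (symbolic_power E 4) u})"
proof -
  obtain p q r s where pqrs: "{p,q} \<in> E" "{r,s} \<in> E" and u: "u = monom (ex [p,q,r,s])"
    using u_form[OF assms(3)] by blast
  define c where "c = ex [p,q,r,s]"
  define P4 where "P4 b \<longleftrightarrow> (\<forall>C\<in>min_vertex_covers E. 4 \<le> (\<Sum>i\<in>C. Poly_Mapping.lookup b i))" for b :: "'v \<Rightarrow>\<^sub>0 nat"
  define P3 where "P3 b \<longleftrightarrow> (\<exists>g\<in>pw (GE E) 3. le_pm g b)" for b :: "'v \<Rightarrow>\<^sub>0 nat"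
  have S4: "(symbolic_power E 4 :: ('v, 'k) mpoly set) = mono_ideal P4"
    unfolding symb_mono P4_def ..
  have S3: "(ideal_pow (edge_ideal E) 3 :: ('v, 'k) mpoly set) = mono_ideal P3"
    unfolding edge_pow P3_def ..
  define X :: "('v \<Rightarrow>\<^sub>0 nat) set" where "X = {Poly_Mapping.single i 1 | i. P4 (Poly_Mapping.single i 1 + c)}"
  have Xeq: "{var i | i. (var i :: ('v, 'k) mpoly) \<in> ideal_colon (symbolic_power E 4) u} = monom ` X"
    unfolding S4 u colon_mono var_in_mono X_def c_def by (auto simp: var_def)
  have L: "ideal_sum (ideal_colon (symbolic_power E 4) u) (ideal_colon (ideal_pow (edge_ideal E) 3) u)
      = (mono_ideal (\<lambda>a. P4 (a + c) \<or> P3 (a + c)) :: ('v, 'k) mpoly set)"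
    unfolding S4 S3 u colon_mono isum_mono c_def ..
  have R: "ideal_sum (ideal_colon (ideal_pow (edge_ideal E) 3) u)
           (ideal_gen {var i | i. var i \<in> ideal_colon (symbolic_power E 4) u})
      = (mono_ideal (\<lambda>a. P3 (a + c) \<or> (\<exists>g\<in>X. le_pm g a)) :: ('v, 'k) mpoly set)"
    unfolding Xeq ig_monom unfolding S3 u colon_mono isum_mono c_def ..
  have lc: "Poly_Mapping.lookup (a + c) v = Poly_Mapping.lookup a v + count_list [p,q,r,s] v" for a v
    by (simp add: c_def lookup_add lookup_ex)
  have lci: "Poly_Mapping.lookup (Poly_Mapping.single i 1 + c) v = count_list [i,p,q,r,s] v" for i v
    by (simp add: c_def lookup_add lookup_ex lookup_single when_def)
  have key: "P4 (a + c) \<or> P3 (a + c) \<longleftrightarrow> P3 (a + c) \<or> (\<exists>g\<in>X. le_pm g a)" for a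
  proof
    assume "P3 (a + c) \<or> (\<exists>g\<in>X. le_pm g a)"
    then show "P4 (a + c) \<or> P3 (a + c)"
    proof
      assume "\<exists>g\<in>X. le_pm g a"
      then obtain i where i: "P4 (Poly_Mapping.single i 1 + c)" "le_pm (Poly_Mapping.single i 1) a"
        unfolding X_def by blast
      have "P4 (a + c)" unfolding P4_def
      proof
        fix C assume "C \<in> min_vertex_covers E"
        then have "4 \<le> (\<Sum>j\<in>C. Poly_Mapping.lookup (Poly_Mapping.single i 1 + c) j)"
          using i(1) unfolding P4_def by blast
        also have "\<dots> \<le> (\<Sum>j\<in>C. Poly_Mapping.lookup (a + c) j)"
          using i(2) by (intro sum_mono) (simp add: le_pm_def lookup_add)
        finally show "4 \<le> (\<Sum>j\<in>C. Poly_Mapping.lookup (a + c) j)" .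
      qed
      then show ?thesis ..
    qed simp
  next
    assume H: "P4 (a + c) \<or> P3 (a + c)"
    show "P3 (a + c) \<or> (\<exists>g\<in>X. le_pm g a)"
    proof (rule ccontr)
      assume N: "\<not> (P3 (a + c) \<or> (\<exists>g\<in>X. le_pm g a))"
      then have p4: "P4 (a + c)" using H by blast
      have A1: "\<forall>C. vertex_cover E C \<longrightarrow> 4 \<le> (\<Sum>v\<in>C. Poly_Mapping.lookup a v + count_list [p,q,r,s] v)"
        using p4 unfolding P4_def lc[symmetric] by (simp add: cov_equiv)
      have A2: "\<forall>i. 1 \<le> Poly_Mapping.lookup a i \<longrightarrow>
          \<not> (\<forall>C. vertex_cover E C \<longrightarrow> 4 \<le> (\<Sum>v\<in>C. count_list [i,p,q,r,s] v))"
      proof (intro allI impI notI)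
        fix i assume i: "1 \<le> Poly_Mapping.lookup a i"
          and Hc: "\<forall>C. vertex_cover E C \<longrightarrow> 4 \<le> (\<Sum>v\<in>C. count_list [i,p,q,r,s] v)"
        have "P4 (Poly_Mapping.single i 1 + c)"
          using Hc unfolding P4_def lci by (simp add: cov_equiv)
        moreover have "le_pm (Poly_Mapping.single i 1) a"
          using i by (auto simp: le_pm_def lookup_single when_def)
        ultimately show False using N unfolding X_def by blast
      qed
      obtain x1 y1 x2 y2 x3 y3 where "{x1,y1} \<in> E" "{x2,y2} \<in> E" "{x3,y3} \<in> E"
        "\<forall>v. count_list [x1,y1,x2,y2,x3,y3] v \<le> Poly_Mapping.lookup a v + count_list [p,q,r,s] v"
        using core[OF assms(1,2) pqrs A1 A2] by blast
      then have "P3 (a + c)" unfolding P3_def lc[symmetric] by (rule P3_from)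
      then show False using N by blast
    qed
  qed
  show ?thesis unfolding L R using key by simp
qed

end
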